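(* Let $T$ be a torus and $X$ a finite $T$-CW complex. For each $(t,x)\in\mathcal X^+\times\mathfrak t_{\mathbb C}$ we have an equality \[ L^2(S^1\wedge X_+)^{t,x}=S^1\wedge L^2X^{t,x}_+ \] of subsets of $L^2(S^1\wedge X_+)$.
   Context: $\mathbb T=\mathbb R/\mathbb Z$, $T$ torus, $\check T=\mathrm{Hom}(\mathbb T,T)$, $\mathfrak t_{\mathbb C}=\check T\otimes\mathbb C$. $\mathcal X^+=\{(t_1,t_2)\in\mathbb C^2:\mathbb Rt_1+\mathbb Rt_2=\mathbb C,\ \mathrm{Im}(t_1/t_2)>0\}$. For a $T$-space $Z$, $L^2Z=\mathrm{Map}(\mathbb T^2,Z)$ with $\mathbb T^2\times T$ acting by $((r,u)\cdot\gamma)(s)=u\cdot\gamma(s-r)$. $T(t,x)$ is the intersection of all closed subgroups $K\subset\mathbb T^2\times T$ with $(t,x)\in\mathrm{Lie}(K)\otimes\mathbb C\subset\mathbb C^2\times\mathfrak t_{\mathbb C}$, and $W^{t,x}$ denotes the $T(t,x)$-fixed subspace of a $\mathbb T^2\times T$-space $W$. $S^1$ has the trivial $T$-action, $X_+=X\sqcup\{\mathrm{pt}\}$ with $T$-fixed basepoint, and $S^1\wedge X_+$ is pointed. The set $S^1\wedge L^2X^{t,x}_+$ is regarded as a subset of $L^2(S^1\wedge X_+)$ via $[z,\gamma]\mapsto(s\mapsto[z,\gamma(s)])$, the basepoint going to the constant loop at the basepoint. *)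

theory Defs
  imports "HOL-Analysis.Analysis"
begin

text \<open>The torus T of rank n is modelled as (R/Z)^n; its elements are represented by vectors
  v :: real^'n (taken modulo the integer lattice).  Hence T-actions are maps
  act :: real^'n => 'x => 'x which are trivial on integer vectors, and closed subgroups
  of T are represented by their (closed) preimages in R^n, which contain Z^n.
  Similarly the group TT^2 x T is represented by (real x real) x real^'n modulo the lattice.
  The exponential map Lie(T) = Tcheck (x) R --> T is then v |-> v mod lattice, and
  t_C = Tcheck (x) C = complex^'n.\<close>

definition int_vec :: "real^'n \<Rightarrow> bool" where
  "int_vec v \<longleftrightarrow> (\<forall>i. v $ i \<in> \<int>)"

definition G_lattice :: "((real \<times> real) \<times> (real^'n)) set" where
  "G_lattice = {((a, b), k). a \<in> \<int> \<and> b \<in> \<int> \<and> int_vec k}"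

definition torus_space :: "'x topology \<Rightarrow> (real^'n \<Rightarrow> 'x \<Rightarrow> 'x) \<Rightarrow> bool" where
  "torus_space X act \<longleftrightarrow>
     continuous_map (prod_topology euclidean X) X (\<lambda>(v, y). act v y)
   \<and> (\<forall>y\<in>topspace X. act 0 y = y)
   \<and> (\<forall>v w. \<forall>y\<in>topspace X. act (v + w) y = act v (act w y))
   \<and> (\<forall>k. int_vec k \<longrightarrow> (\<forall>y\<in>topspace X. act k y = y))"

definition closed_subgroup_T :: "(real^'n) set \<Rightarrow> bool" where
  "closed_subgroup_T H \<longleftrightarrow> closed H \<and> {k. int_vec k} \<subseteq> H \<and> (\<forall>a\<in>H. \<forall>b\<in>H. a - b \<in> H)"

definition closed_subgroup_G :: "((real \<times> real) \<times> (real^'n)) set \<Rightarrow> bool" where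
  "closed_subgroup_G K \<longleftrightarrow> closed K \<and> G_lattice \<subseteq> K \<and> (\<forall>a\<in>K. \<forall>b\<in>K. a - b \<in> K)"

definition disk :: "nat \<Rightarrow> (nat \<Rightarrow> real) set" where
  "disk n = {d. (\<forall>i\<ge>n. d i = 0) \<and> (\<Sum>i<n. (d i)\<^sup>2) \<le> 1}"

definition open_disk :: "nat \<Rightarrow> (nat \<Rightarrow> real) set" where
  "open_disk n = {d. (\<forall>i\<ge>n. d i = 0) \<and> (\<Sum>i<n. (d i)\<^sup>2) < 1}"

definition disk_boundary :: "nat \<Rightarrow> (nat \<Rightarrow> real) set" where
  "disk_boundary n = {d. (\<forall>i\<ge>n. d i = 0) \<and> (\<Sum>i<n. (d i)\<^sup>2) = 1}"

definition disk_top :: "nat \<Rightarrow> (nat \<Rightarrow> real) topology" where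
  "disk_top n = subtopology (powertop_real UNIV) (disk n)"

text \<open>An equivariant cell T/H x D^n is given by (H, n, phi) with phi : D^n -> X^H continuous;
  its characteristic map is (vH, d) |-> act v (phi d).  The open cell is the image of
  T/H x int(D^n).\<close>
definition open_cell ::
  "(real^'n \<Rightarrow> 'x \<Rightarrow> 'x) \<Rightarrow> (real^'n) set \<times> nat \<times> ((nat \<Rightarrow> real) \<Rightarrow> 'x) \<Rightarrow> 'x set" where
  "open_cell act c = (case c of (H, n, \<phi>) \<Rightarrow> {act v (\<phi> d) | v d. d \<in> open_disk n})"

definition finite_T_CW :: "'x topology \<Rightarrow> (real^'n \<Rightarrow> 'x \<Rightarrow> 'x) \<Rightarrow> bool" where
  "finite_T_CW X act \<longleftrightarrow> torus_space X act \<and> Hausdorff_space X \<and>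
    (\<exists>cells :: ((real^'n) set \<times> nat \<times> ((nat \<Rightarrow> real) \<Rightarrow> 'x)) list.
       (\<forall>(H, n, \<phi>) \<in> set cells.
          closed_subgroup_T H
        \<and> continuous_map (disk_top n) X \<phi>
        \<and> (\<forall>d\<in>disk n. \<forall>h\<in>H. act h (\<phi> d) = \<phi> d)
        \<and> (\<forall>v v' d d'. d \<in> open_disk n \<and> d' \<in> open_disk n \<and> act v (\<phi> d) = act v' (\<phi> d')
              \<longrightarrow> d = d' \<and> v - v' \<in> H)
        \<and> (\<forall>v. \<forall>d\<in>disk_boundary n.
              act v (\<phi> d) \<in> \<Union> {open_cell act c | c. c \<in> set cells \<and> fst (snd c) < n}))
     \<and> (\<forall>i<length cells. \<forall>j<length cells. i \<noteq> j \<longrightarrow>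
              open_cell act (cells ! i) \<inter> open_cell act (cells ! j) = {})
     \<and> topspace X = \<Union> (open_cell act ` set cells))"

text \<open>S^1 is the unit circle in C with basepoint 1 (trivial T-action); X_+ = 'x option with
  basepoint None; S^1 /\ X_+ is modelled on (complex x 'x) option with basepoint None, where
  Some (z, y) (z ~= 1) is the class [z, y].\<close>

definition plus_top :: "'x topology \<Rightarrow> 'x option topology" where
  "plus_top X = topology (\<lambda>U. U \<subseteq> insert None (Some ` topspace X) \<and> openin X (Some -` U))"

definition quotient_top :: "'a topology \<Rightarrow> ('a \<Rightarrow> 'b) \<Rightarrow> 'b topology" where
  "quotient_top X f = topology (\<lambda>U. U \<subseteq> f ` topspace X \<and> openin X {p \<in> topspace X. f p \<in> U})"

definition smash_pt :: "complex \<Rightarrow> 'x option \<Rightarrow> (complex \<times> 'x) option" where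
  "smash_pt z y = (case y of None \<Rightarrow> None | Some p \<Rightarrow> (if z = 1 then None else Some (z, p)))"

definition smash_top :: "'x topology \<Rightarrow> (complex \<times> 'x) option topology" where
  "smash_top X = quotient_top (prod_topology (subtopology euclidean (sphere 0 1)) (plus_top X))
                              (\<lambda>(z, y). smash_pt z y)"

definition smash_act :: "(real^'n \<Rightarrow> 'x \<Rightarrow> 'x) \<Rightarrow> (real^'n) \<Rightarrow> (complex \<times> 'x) option \<Rightarrow> (complex \<times> 'x) option" where
  "smash_act act v = map_option (\<lambda>(z, p). (z, act v p))"

text \<open>L^2 Z = Map(TT^2, Z): continuous maps TT^2 -> Z, represented as continuous
  Z^2-periodic maps R^2 -> Z.\<close>
definition loops2 :: "'z topology \<Rightarrow> (real \<times> real \<Rightarrow> 'z) set" where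
  "loops2 Z = {\<gamma>. continuous_map euclidean Z \<gamma>
                  \<and> (\<forall>s. \<gamma> (s + (1, 0)) = \<gamma> s) \<and> (\<forall>s. \<gamma> (s + (0, 1)) = \<gamma> s)}"

definition loop_act :: "(real^'n \<Rightarrow> 'z \<Rightarrow> 'z) \<Rightarrow> (real \<times> real) \<times> (real^'n) \<Rightarrow> (real \<times> real \<Rightarrow> 'z) \<Rightarrow> (real \<times> real \<Rightarrow> 'z)" where
  "loop_act act g \<gamma> = (\<lambda>s. act (snd g) (\<gamma> (s - fst g)))"

definition lie :: "((real \<times> real) \<times> (real^'n)) set \<Rightarrow> ((real \<times> real) \<times> (real^'n)) set" where
  "lie K = {a. \<forall>s::real. s *\<^sub>R a \<in> K}"

definition complexify :: "(real \<times> real) \<times> (real^'n) \<Rightarrow> (real \<times> real) \<times> (real^'n) \<Rightarrow> (complex \<times> complex) \<times> (complex^'n)" where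
  "complexify a b = ((Complex (fst (fst a)) (fst (fst b)), Complex (snd (fst a)) (snd (fst b))),
                     (\<chi> i. Complex (snd a $ i) (snd b $ i)))"

definition lieC :: "((real \<times> real) \<times> (real^'n)) set \<Rightarrow> ((complex \<times> complex) \<times> (complex^'n)) set" where
  "lieC K = {complexify a b | a b. a \<in> lie K \<and> b \<in> lie K}"

definition Ttx :: "complex \<times> complex \<Rightarrow> (complex^'n) \<Rightarrow> ((real \<times> real) \<times> (real^'n)) set" where
  "Ttx t x = \<Inter> {K. closed_subgroup_G K \<and> (t, x) \<in> lieC K}"

definition fixed_loops :: "'z topology \<Rightarrow> (real^'n \<Rightarrow> 'z \<Rightarrow> 'z) \<Rightarrow> complex \<times> complex \<Rightarrow> (complex^'n)
                            \<Rightarrow> (real \<times> real \<Rightarrow> 'z) set" where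
  "fixed_loops Z act t x = {\<gamma> \<in> loops2 Z. \<forall>g \<in> Ttx t x. loop_act act g \<gamma> = \<gamma>}"

definition Xplus :: "(complex \<times> complex) set" where
  "Xplus = {(t1, t2). {a *\<^sub>R t1 + b *\<^sub>R t2 | a b. True} = UNIV \<and> Im (t1 / t2) > 0}"

end

theory Submission imports Defs begin

lemma openin_plus_top:
  "openin (plus_top X) U \<longleftrightarrow> U \<subseteq> insert None (Some ` topspace X) \<and> openin X (Some -` U)"
proof -
  have "istopology (\<lambda>U. U \<subseteq> insert None (Some ` topspace X) \<and> openin X (Some -` U))"
    unfolding istopology_def by (auto simp: vimage_Union intro!: openin_Union)
  then show ?thesis unfolding plus_top_def by simp
qed

lemma topspace_plus_top: "topspace (plus_top X) = insert None (Some ` topspace X)"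
proof -
  have "openin (plus_top X) (insert None (Some ` topspace X))"
  proof -
    have "Some -` insert None (Some ` topspace X) = topspace X" by auto
    then show ?thesis by (simp add: openin_plus_top)
  qed
  then show ?thesis using openin_subset[of "plus_top X"] openin_plus_top
    by (metis openin_topspace subset_antisym)
qed

lemma openin_quotient_top:
  "openin (quotient_top X f) U \<longleftrightarrow> U \<subseteq> f ` topspace X \<and> openin X {p \<in> topspace X. f p \<in> U}"
proof -
  have "istopology (\<lambda>U. U \<subseteq> f ` topspace X \<and> openin X {p \<in> topspace X. f p \<in> U})"
    unfolding istopology_def
  proof (rule conjI; intro allI impI)
    fix S T assume  "S \<subseteq> f ` topspace X \<and> openin X {p \<in> topspace X. f p \<in> S}"
      "T \<subseteq> f ` topspace X \<and> openin X {p \<in> topspace X. f p \<in> T}"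
    moreover have "{p \<in> topspace X. f p \<in> S \<inter> T} = {p \<in> topspace X. f p \<in> S} \<inter> {p \<in> topspace X. f p \<in> T}" by auto
    ultimately show "S \<inter> T \<subseteq> f ` topspace X \<and> openin X {p \<in> topspace X. f p \<in> S \<inter> T}" by (auto intro: openin_Int)
  next
    fix K assume a: "\<forall>S\<in>K. S \<subseteq> f ` topspace X \<and> openin X {p \<in> topspace X. f p \<in> S}"
    have "{p \<in> topspace X. f p \<in> \<Union>K} = \<Union> ((\<lambda>S. {p \<in> topspace X. f p \<in> S}) ` K)" by auto
    with a show "\<Union>K \<subseteq> f ` topspace X \<and> openin X {p \<in> topspace X. f p \<in> \<Union>K}"
      by (auto intro!: openin_Union)
  qed
  then show ?thesis unfolding quotient_top_def by simp
qed

lemma topspace_quotient_top: "topspace (quotient_top X f) = f ` topspace X"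
proof -
  have "openin (quotient_top X f) (f ` topspace X)"
  proof -
    have "{p \<in> topspace X. f p \<in> f ` topspace X} = topspace X" by auto
    then show ?thesis by (simp add: openin_quotient_top)
  qed
  then show ?thesis using openin_quotient_top
    by (metis openin_subset openin_topspace subset_antisym)
qed

lemma continuous_quotient_top: "continuous_map X (quotient_top X f) f"
  unfolding continuous_map by (auto simp: topspace_quotient_top openin_quotient_top)

lemma continuous_Some: "continuous_map X (plus_top X) Some"
  unfolding continuous_map
  by (auto simp: topspace_plus_top openin_plus_top vimage_def openin_subset[THEN subsetD]
     intro: openin_subopen[THEN iffD2])


lemma topspace_smash_top:
  "topspace (smash_top X) = (\<lambda>(z, y). smash_pt z y) ` (sphere 0 1 \<times> insert None (Some ` topspace X))"
  unfolding smash_top_def topspace_quotient_top by (simp add: topspace_plus_top)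

lemma smash_topspace_Some:
  assumes "Some (z, q) \<in> topspace (smash_top X)"
  shows "z \<in> sphere 0 1 \<and> z \<noteq> 1 \<and> q \<in> topspace X"
  using assms unfolding topspace_smash_top
  by (auto simp: smash_pt_def split: option.splits if_splits)

lemma None_in_smash: "None \<in> topspace (smash_top X)"
  unfolding topspace_smash_top
  by (rule image_eqI[where x="(1, None)"]) (auto simp: smash_pt_def)

lemma smash_act_pt: "smash_act act u (smash_pt z (Some q)) = smash_pt z (Some (act u q))"
  by (simp add: smash_pt_def smash_act_def)

lemma Ttx_surj:
  fixes x :: "complex^'n"
  assumes "Im (fst t / snd t) > 0"
  shows "\<exists>u. (r, u) \<in> Ttx t x"
proof -
  obtain t1 t2 where t: "t = (t1, t2)" by (cases t)
  obtain r1 r2 where r: "r = (r1, r2)" by (cases r)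
  define a :: "(real \<times> real) \<times> (real^'n)" where "a = ((Re t1, Re t2), \<chi> i. Re (x $ i))"
  define b :: "(real \<times> real) \<times> (real^'n)" where "b = ((Im t1, Im t2), \<chi> i. Im (x $ i))"
  define D where "D = Re t1 * Im t2 - Im t1 * Re t2"
  have "Im (t1 / t2) > 0" using assms t by simp
  hence "D \<noteq> 0" unfolding D_def Im_divide by (auto simp: field_simps)
  define \<alpha> where "\<alpha> = (r1 * Im t2 - r2 * Im t1) / D"
  define \<beta> where "\<beta> = (Re t1 * r2 - Re t2 * r1) / D"
  have key: "\<alpha> *\<^sub>R a + \<beta> *\<^sub>R b \<in> K" if K: "closed_subgroup_G K" "(t, x) \<in> lieC K" for K
  proof -
    obtain a' b' where ab: "(t, x) = complexify a' b'" "a' \<in> lie K" "b' \<in> lie K"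
      using K(2) unfolding lieC_def by blast
    have "a' = a" "b' = b" using ab(1) unfolding complexify_def a_def b_def t
      by (auto simp: vec_eq_iff prod_eq_iff)
    hence la: "\<And>s. s *\<^sub>R a \<in> K" and lb: "\<And>s. s *\<^sub>R b \<in> K" using ab unfolding lie_def by auto
    have sub: "\<And>p q. p \<in> K \<Longrightarrow> q \<in> K \<Longrightarrow> p - q \<in> K" using K(1) unfolding closed_subgroup_G_def by blast
    have "(-\<beta>) *\<^sub>R b \<in> K" by (rule lb)
    from sub[OF la[of \<alpha>] this] show ?thesis by simp
  qed
  have "\<alpha> *\<^sub>R a + \<beta> *\<^sub>R b \<in> Ttx t x" unfolding Ttx_def using key by blast
  moreover have "fst (\<alpha> *\<^sub>R a + \<beta> *\<^sub>R b) = r"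
  proof -
    have e1: "\<alpha> * Re t1 + \<beta> * Im t1 = r1"
    proof -
      have "\<alpha> * Re t1 + \<beta> * Im t1 = ((r1 * Im t2 - r2 * Im t1) * Re t1 + (Re t1 * r2 - Re t2 * r1) * Im t1) / D"
        unfolding \<alpha>_def \<beta>_def by (simp add: add_divide_distrib)
      also have "(r1 * Im t2 - r2 * Im t1) * Re t1 + (Re t1 * r2 - Re t2 * r1) * Im t1 = r1 * D"
        unfolding D_def by (simp add: algebra_simps)
      finally show ?thesis using \<open>D \<noteq> 0\<close> by simp
    qed
    have e2: "\<alpha> * Re t2 + \<beta> * Im t2 = r2"
    proof -
      have "\<alpha> * Re t2 + \<beta> * Im t2 = ((r1 * Im t2 - r2 * Im t1) * Re t2 + (Re t1 * r2 - Re t2 * r1) * Im t2) / D"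
        unfolding \<alpha>_def \<beta>_def by (simp add: add_divide_distrib)
      also have "(r1 * Im t2 - r2 * Im t1) * Re t2 + (Re t1 * r2 - Re t2 * r1) * Im t2 = r2 * D"
        unfolding D_def by (simp add: algebra_simps)
      finally show ?thesis using \<open>D \<noteq> 0\<close> by simp
    qed
    show ?thesis using e1 e2 unfolding a_def b_def r by simp
  qed
  ultimately show ?thesis by (metis prod.collapse)
qed


lemma smash_open_V:
  assumes U: "openin X U"
  shows "openin (smash_top X) {Some (w, q) | w q. w \<in> sphere (0::complex) 1 \<and> w \<noteq> 1 \<and> q \<in> U}"
    (is "openin _ ?V")
proof -
  have Usub: "U \<subseteq> topspace X" using openin_subset[OF U] .
  have sub: "?V \<subseteq> (\<lambda>(z, y). smash_pt z y) ` topspace (prod_topology (subtopology euclidean (sphere (0::complex) 1)) (plus_top X))"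
  proof
    fix v assume "v \<in> ?V"
    then obtain w q where v: "v = Some (w, q)" "w \<in> sphere (0::complex) 1" "w \<noteq> 1" "q \<in> U" by blast
    show "v \<in> (\<lambda>(z, y). smash_pt z y) ` topspace (prod_topology (subtopology euclidean (sphere (0::complex) 1)) (plus_top X))"
      by (rule image_eqI[where x="(w, Some q)"]) (use v Usub in \<open>auto simp: smash_pt_def topspace_plus_top\<close>)
  qed
  have eq: "{p \<in> topspace (prod_topology (subtopology euclidean (sphere (0::complex) 1)) (plus_top X)).
              (\<lambda>(z, y). smash_pt z y) p \<in> ?V} = (sphere (0::complex) 1 - {1}) \<times> Some ` U"
  proof (rule set_eqI; rule iffI)
    fix p assume p: "p \<in> {p \<in> topspace (prod_topology (subtopology euclidean (sphere (0::complex) 1)) (plus_top X)).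
              (\<lambda>(z, y). smash_pt z y) p \<in> ?V}"
    obtain w y where wy: "p = (w, y)" by (cases p)
    have w: "w \<in> sphere (0::complex) 1" using p wy by simp
    have fv: "smash_pt w y \<in> ?V" using p wy by simp
    show "p \<in> (sphere (0::complex) 1 - {1}) \<times> Some ` U"
    proof (cases y)
      case None then show ?thesis using fv by (simp add: smash_pt_def)
    next
      case (Some q)
      show ?thesis
      proof (cases "w = 1")
        case True then show ?thesis using fv Some by (simp add: smash_pt_def)
      next
        case False
        then have "Some (w, q) \<in> ?V" using fv Some by (simp add: smash_pt_def)
        then have "q \<in> U" by blast
        then show ?thesis using wy w False Some by blast
      qed
    qed
  next
    fix p assume p: "p \<in> (sphere (0::complex) 1 - {1}) \<times> Some ` U"
    then obtain w q where wq: "p = (w, Some q)" "w \<in> sphere (0::complex) 1" "w \<noteq> 1" "q \<in> U" by blast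
    have "q \<in> topspace X" using wq Usub by blast
    then have "p \<in> topspace (prod_topology (subtopology euclidean (sphere (0::complex) 1)) (plus_top X))"
      using wq by (simp add: topspace_plus_top)
    moreover have "(\<lambda>(z, y). smash_pt z y) p \<in> ?V" using wq by (auto simp: smash_pt_def)
    ultimately show "p \<in> {p \<in> topspace (prod_topology (subtopology euclidean (sphere (0::complex) 1)) (plus_top X)).
              (\<lambda>(z, y). smash_pt z y) p \<in> ?V}" by blast
  qed
  have o1: "openin (subtopology euclidean (sphere (0::complex) 1)) (sphere (0::complex) 1 - {1})"
  proof -
    have "sphere (0::complex) 1 - {1} = sphere (0::complex) 1 \<inter> (- {1})" by blast
    moreover have "open (- {1::complex})" by (simp add: open_Compl)
    ultimately show ?thesis by (simp add: openin_open_Int)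
  qed
  have o2: "openin (plus_top X) (Some ` U)"
    using Usub U by (auto simp: openin_plus_top inj_vimage_image_eq)
  have "openin (prod_topology (subtopology euclidean (sphere (0::complex) 1)) (plus_top X)) ((sphere (0::complex) 1 - {1}) \<times> Some ` U)"
    using o1 o2 by (simp add: openin_prod_Times_iff)
  then show ?thesis unfolding smash_top_def openin_quotient_top using sub eq by simp
qed

theorem mainTheorem17:
  fixes X :: "'x topology" and act :: "real^'n \<Rightarrow> 'x \<Rightarrow> 'x"
    and t :: "complex \<times> complex" and x :: "complex^'n"
  assumes "finite_T_CW X act"
    and "t \<in> Xplus"
  shows "fixed_loops (smash_top X) (smash_act act) t x =
           insert (\<lambda>s. None)
             ((\<lambda>(z, \<gamma>). \<lambda>s. smash_pt z (Some (\<gamma> s))) ` (sphere 0 1 \<times> fixed_loops X act t x))"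
proof -
  have "Im (fst t / snd t) > 0" using assms(2) unfolding Xplus_def by (cases t) auto
  hence surj: "\<And>r. \<exists>u. (r, u) \<in> Ttx t x" by (rule Ttx_surj)
  show ?thesis
  proof (rule set_eqI, rule iffI)
    fix \<gamma> assume g: "\<gamma> \<in> fixed_loops (smash_top X) (smash_act act) t x"
    have gc: "continuous_map euclidean (smash_top X) \<gamma>"
      and gp1: "\<And>s. \<gamma> (s + (1, 0)) = \<gamma> s" and gp2: "\<And>s. \<gamma> (s + (0, 1)) = \<gamma> s"
      and gf: "\<And>g. g \<in> Ttx t x \<Longrightarrow> loop_act (smash_act act) g \<gamma> = \<gamma>"
      using g unfolding fixed_loops_def loops2_def by auto
    have rel: "\<exists>u. \<gamma> s = smash_act act u (\<gamma> 0)" for s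
    proof -
      obtain u where "(s, u) \<in> Ttx t x" using surj by blast
      from fun_cong[OF gf[OF this], of s] have "smash_act act u (\<gamma> 0) = \<gamma> s" unfolding loop_act_def by simp
      then show ?thesis by (intro exI[where x=u]) (rule sym)
    qed
    show "\<gamma> \<in> insert (\<lambda>s. None)
             ((\<lambda>(z, \<gamma>). \<lambda>s. smash_pt z (Some (\<gamma> s))) ` (sphere 0 1 \<times> fixed_loops X act t x))"
    proof (cases "\<gamma> 0")
      case None
      have "\<gamma> = (\<lambda>s. None)"
      proof
        fix s obtain u where "\<gamma> s = smash_act act u (\<gamma> 0)" using rel by blast
        then show "\<gamma> s = None" using None by (simp add: smash_act_def)
      qed
      then show ?thesis by simp
    next
      case (Some zp)
      obtain z p where zp: "\<gamma> 0 = Some (z, p)" using Some by (cases zp) auto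
      have "\<gamma> 0 \<in> topspace (smash_top X)" using continuous_map_image_subset_topspace[OF gc] by auto
      hence zs: "z \<in> sphere 0 1" "z \<noteq> 1" using smash_topspace_Some[of z p X] zp by simp_all
      define \<gamma>' where "\<gamma>' = (\<lambda>s. snd (the (\<gamma> s)))"
      have gs: "\<gamma> s = Some (z, \<gamma>' s)" for s
      proof -
        obtain u where "\<gamma> s = smash_act act u (\<gamma> 0)" using rel by blast
        then show ?thesis unfolding \<gamma>'_def zp by (simp add: smash_act_def)
      qed
      have geq: "\<gamma> = (\<lambda>s. smash_pt z (Some (\<gamma>' s)))"
        by (rule ext) (simp add: gs smash_pt_def zs)
      have "\<gamma> s \<in> topspace (smash_top X)" for s using continuous_map_image_subset_topspace[OF gc] by auto
      hence gts: "\<gamma>' s \<in> topspace X" for s using smash_topspace_Some[of z "\<gamma>' s" X] gs by simp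
      have "continuous_map euclidean X \<gamma>'"
        unfolding continuous_map
      proof (intro conjI allI impI)
        show "\<gamma>' ` topspace euclidean \<subseteq> topspace X" using gts by auto
      next
        fix U assume U: "openin X U"
        let ?V = "{Some (w, q) | w q. w \<in> sphere 0 1 \<and> w \<noteq> 1 \<and> q \<in> U}"
        have "openin euclidean {s \<in> topspace euclidean. \<gamma> s \<in> ?V}"
          using gc smash_open_V[OF U] unfolding continuous_map by blast
        moreover have "{s \<in> topspace euclidean. \<gamma> s \<in> ?V} = {s \<in> topspace euclidean. \<gamma>' s \<in> U}"
          using gs zs by auto
        ultimately show "openin euclidean {s \<in> topspace euclidean. \<gamma>' s \<in> U}" by simp
      qed
      moreover have "\<gamma>' (s + (1, 0)) = \<gamma>' s" "\<gamma>' (s + (0, 1)) = \<gamma>' s" for s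
        using gp1[of s] gp2[of s] gs by simp_all
      moreover have "loop_act act g \<gamma>' = \<gamma>'" if "g \<in> Ttx t x" for g
      proof
        fix s
        from fun_cong[OF gf[OF that], of s] show "loop_act act g \<gamma>' s = \<gamma>' s"
          unfolding loop_act_def by (simp add: gs smash_act_def)
      qed
      ultimately have "\<gamma>' \<in> fixed_loops X act t x" unfolding fixed_loops_def loops2_def by auto
      then have "\<gamma> \<in> (\<lambda>(z, \<gamma>). \<lambda>s. smash_pt z (Some (\<gamma> s))) ` (sphere 0 1 \<times> fixed_loops X act t x)"
        using zs(1) geq by (intro image_eqI[where x="(z, \<gamma>')"]) simp_all
      then show ?thesis by (rule insertI2)
    qed
  next
    fix \<gamma> assume "\<gamma> \<in> insert (\<lambda>s. None)
             ((\<lambda>(z, \<gamma>). \<lambda>s. smash_pt z (Some (\<gamma> s))) ` (sphere 0 1 \<times> fixed_loops X act t x))"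
    then consider "\<gamma> = (\<lambda>s. None)"
      | z \<delta> where "z \<in> sphere 0 1" "\<delta> \<in> fixed_loops X act t x" "\<gamma> = (\<lambda>s. smash_pt z (Some (\<delta> s)))"
      by auto
    then show "\<gamma> \<in> fixed_loops (smash_top X) (smash_act act) t x"
    proof cases
      case 1
      then show ?thesis using None_in_smash
        by (auto simp: fixed_loops_def loops2_def loop_act_def smash_act_def)
    next
      case 2
      have dc: "continuous_map euclidean X \<delta>"
        and df: "\<And>g. g \<in> Ttx t x \<Longrightarrow> loop_act act g \<delta> = \<delta>"
        and dp: "\<And>s. \<delta> (s + (1, 0)) = \<delta> s" "\<And>s. \<delta> (s + (0, 1)) = \<delta> s"
        using 2(2) unfolding fixed_loops_def loops2_def by auto
      have "continuous_map euclidean (prod_topology (subtopology euclidean (sphere 0 1)) (plus_top X))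
              (\<lambda>s. (z, Some (\<delta> s)))"
        by (intro continuous_map_pairedI continuous_map_compose[OF dc continuous_Some, unfolded o_def])
          (use 2(1) in simp)
      from continuous_map_compose[OF this continuous_quotient_top[where f="\<lambda>(z, y). smash_pt z y"]]
      have "continuous_map euclidean (smash_top X) \<gamma>"
        unfolding smash_top_def 2(3) o_def by simp
      moreover have "loop_act (smash_act act) g \<gamma> = \<gamma>" if "g \<in> Ttx t x" for g
      proof
        fix s
        have "act (snd g) (\<delta> (s - fst g)) = \<delta> s"
          using fun_cong[OF df[OF that], of s] unfolding loop_act_def by simp
        then show "loop_act (smash_act act) g \<gamma> s = \<gamma> s"
          unfolding loop_act_def 2(3) by (simp add: smash_act_pt)
      qed
      ultimately show ?thesis unfolding fixed_loops_def loops2_def using dp 2(3) by auto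
    qed
  qed
qed

end
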